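(* Let $E$ be a congruence on $\overline{\boldsymbol{T}(X_1,\ldots,X_n)}$, $F$ a congruence on $\overline{\boldsymbol{T}(Y_1,\ldots,Y_m)}$, $V:=\boldsymbol{V}(E)$, $W:=\boldsymbol{V}(F)$, and let $\psi:\overline{\boldsymbol{T}(X_1,\ldots,X_n)}/E\to\overline{\boldsymbol{T}(Y_1,\ldots,Y_m)}/F$ be a $\boldsymbol{T}$-algebra homomorphism. For every $f\in\overline{\boldsymbol{T}(X_1,\ldots,X_n)}/E$: (1) $\sup\{f(x)\mid x\in V\}\ge\sup\{\psi(f)(y)\mid y\in W\}$; (2) $\inf\{f(x)\mid x\in V\}\le\inf\{\psi(f)(y)\mid y\in W\}$. Moreover, if $W$ is nonempty, $\psi$ is injective and $F=\boldsymbol{E}(W)$, then equality holds in both (1) and (2).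
   Context: $\boldsymbol{T}=\mathbb{R}\cup\{-\infty\}$ with $a\oplus b=\max\{a,b\}$, $a\odot b=a+b$. $\overline{\boldsymbol{T}[X_1,\ldots,X_n]}$ is the tropical polynomial semiring modulo identifying polynomials defining the same function $\boldsymbol{T}^n\to\boldsymbol{T}$; it is cancellative and $\overline{\boldsymbol{T}(X_1,\ldots,X_n)}$ is its semifield of fractions. Each element defines a function $\mathbb{R}^n\to\boldsymbol{T}$ (quotients evaluated as differences). $\boldsymbol{T}$-algebras are semirings with a semiring homomorphism from $\boldsymbol{T}$; homomorphisms are compatible semiring homomorphisms. A congruence is an equivalence relation compatible with both operations. $\boldsymbol{V}(E)=\{x\in\mathbb{R}^n\mid f(x)=g(x)\ \forall(f,g)\in E\}$; for $W\subset\mathbb{R}^m$, $\boldsymbol{E}(W)=\{(f,g)\mid f(y)=g(y)\ \forall y\in W\}$. An element of the quotient by $E$ (resp. $F$) is evaluated at points of $\boldsymbol{V}(E)$ (resp. $\boldsymbol{V}(F)$) via any representative; suprema and infima are taken in $\boldsymbol{T}\cup\{+\infty\}$. *)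

theory Defs
  imports "HOL-Analysis.Analysis"
begin

text \<open>Tropical semifield T = real \<union> {-\<infinity>}, modelled inside ereal (values never +\<infinity>). A tropical polynomial is identified with the
  function it defines; a tropical monomial with coefficient c and exponent a is
  x \<mapsto> c + \<Sum> a_i x_i; the polynomial is the max over finitely many monomials
  (empty max = -\<infinity>, the zero polynomial).\<close>

definition trop_poly :: "(real^'n \<Rightarrow> ereal) set" where
  "trop_poly = {p. \<exists>S::(real \<times> ('n \<Rightarrow> nat)) set. finite S \<and>
      p = (\<lambda>x. SUP ca\<in>S. ereal (fst ca + (\<Sum>i\<in>UNIV. real (snd ca i) * x $ i)))}"

text \<open>Semifield of fractions: quotients p/q with q nonzero, evaluated as differences.\<close>
definition trop_rat :: "(real^'n \<Rightarrow> ereal) set" where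
  "trop_rat = {f. \<exists>p q. p \<in> trop_poly \<and> q \<in> trop_poly \<and> q \<noteq> (\<lambda>x. -\<infinity>) \<and>
      f = (\<lambda>x. p x - q x)}"

definition trop_congruence ::
  "((real^'n \<Rightarrow> ereal) \<times> (real^'n \<Rightarrow> ereal)) set \<Rightarrow> bool" where
  "trop_congruence E \<longleftrightarrow> equiv trop_rat E \<and>
     (\<forall>f g f' g'. (f, g) \<in> E \<longrightarrow> (f', g') \<in> E \<longrightarrow>
        ((\<lambda>x. max (f x) (f' x)), (\<lambda>x. max (g x) (g' x))) \<in> E \<and>
        ((\<lambda>x. f x + f' x), (\<lambda>x. g x + g' x)) \<in> E)"

definition Vset :: "((real^'n \<Rightarrow> ereal) \<times> (real^'n \<Rightarrow> ereal)) set \<Rightarrow> (real^'n) set" where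
  "Vset E = {x. \<forall>(f, g) \<in> E. f x = g x}"

definition Eset :: "(real^'n) set \<Rightarrow> ((real^'n \<Rightarrow> ereal) \<times> (real^'n \<Rightarrow> ereal)) set" where
  "Eset W = {(f, g). f \<in> trop_rat \<and> g \<in> trop_rat \<and> (\<forall>y\<in>W. f y = g y)}"

definition qcarrier :: "((real^'n \<Rightarrow> ereal) \<times> (real^'n \<Rightarrow> ereal)) set \<Rightarrow> (real^'n \<Rightarrow> ereal) set set" where
  "qcarrier E = trop_rat // E"

definition qrep :: "(real^'n \<Rightarrow> ereal) set \<Rightarrow> (real^'n \<Rightarrow> ereal)" where
  "qrep X = (SOME f. f \<in> X)"

definition qadd :: "((real^'n \<Rightarrow> ereal) \<times> (real^'n \<Rightarrow> ereal)) set \<Rightarrow>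
    (real^'n \<Rightarrow> ereal) set \<Rightarrow> (real^'n \<Rightarrow> ereal) set \<Rightarrow> (real^'n \<Rightarrow> ereal) set" where
  "qadd E X Y = E `` {\<lambda>x. max (qrep X x) (qrep Y x)}"

definition qmul :: "((real^'n \<Rightarrow> ereal) \<times> (real^'n \<Rightarrow> ereal)) set \<Rightarrow>
    (real^'n \<Rightarrow> ereal) set \<Rightarrow> (real^'n \<Rightarrow> ereal) set \<Rightarrow> (real^'n \<Rightarrow> ereal) set" where
  "qmul E X Y = E `` {\<lambda>x. qrep X x + qrep Y x}"

definition qconst :: "((real^'n \<Rightarrow> ereal) \<times> (real^'n \<Rightarrow> ereal)) set \<Rightarrow> ereal \<Rightarrow> (real^'n \<Rightarrow> ereal) set" where
  "qconst E c = E `` {\<lambda>x. c}"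

definition talg_hom ::
  "((real^'n \<Rightarrow> ereal) \<times> (real^'n \<Rightarrow> ereal)) set \<Rightarrow> ((real^'m \<Rightarrow> ereal) \<times> (real^'m \<Rightarrow> ereal)) set \<Rightarrow>
   ((real^'n \<Rightarrow> ereal) set \<Rightarrow> (real^'m \<Rightarrow> ereal) set) \<Rightarrow> bool" where
  "talg_hom E F \<psi> \<longleftrightarrow>
     (\<forall>X\<in>qcarrier E. \<psi> X \<in> qcarrier F) \<and>
     (\<forall>X\<in>qcarrier E. \<forall>Y\<in>qcarrier E.
        \<psi> (qadd E X Y) = qadd F (\<psi> X) (\<psi> Y) \<and> \<psi> (qmul E X Y) = qmul F (\<psi> X) (\<psi> Y)) \<and>
     (\<forall>c. c \<noteq> \<infinity> \<longrightarrow> \<psi> (qconst E c) = qconst F c)"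

definition qeval :: "(real^'n \<Rightarrow> ereal) set \<Rightarrow> real^'n \<Rightarrow> ereal" where
  "qeval X x = qrep X x"

end

theory Submission
  imports Defs
begin

context
  fixes E :: "((real^'n \<Rightarrow> ereal) \<times> (real^'n \<Rightarrow> ereal)) set"
  assumes cong: "trop_congruence E"
begin

lemma cong_equiv: "equiv trop_rat E"
  using cong by (simp add: trop_congruence_def)

lemma cong_max: "(f,g)\<in>E \<Longrightarrow> (f',g')\<in>E \<Longrightarrow>
   ((\<lambda>x. max (f x) (f' x)), (\<lambda>x. max (g x) (g' x))) \<in> E"
  using cong by (simp add: trop_congruence_def)

lemma cong_add: "(f,g)\<in>E \<Longrightarrow> (f',g')\<in>E \<Longrightarrow>
   ((\<lambda>x. f x + f' x), (\<lambda>x. g x + g' x)) \<in> E"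
  using cong by (simp add: trop_congruence_def)

lemma cong_refl: "g \<in> trop_rat \<Longrightarrow> (g,g) \<in> E"
  using cong_equiv unfolding equiv_def refl_on_def by blast

lemma cong_sym: "(g,h) \<in> E \<Longrightarrow> (h,g) \<in> E"
  using cong_equiv unfolding equiv_def sym_def by blast

lemma cong_dom: "(g,h) \<in> E \<Longrightarrow> g \<in> trop_rat \<and> h \<in> trop_rat"
  using cong_equiv equiv_type by blast

lemma rat_max: "g \<in> trop_rat \<Longrightarrow> h \<in> trop_rat \<Longrightarrow> (\<lambda>x. max (g x) (h x)) \<in> trop_rat"
  for g h :: "real^'n \<Rightarrow> ereal"
proof -
  assume a: "g \<in> trop_rat" "h \<in> trop_rat"
  have "((\<lambda>x. max (g x) (h x)), (\<lambda>x. max (g x) (h x))) \<in> E"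
    by (rule cong_max[OF cong_refl[OF a(1)] cong_refl[OF a(2)]])
  thus ?thesis using cong_dom by blast
qed

lemma rat_add: "g \<in> trop_rat \<Longrightarrow> h \<in> trop_rat \<Longrightarrow> (\<lambda>x. g x + h x) \<in> trop_rat"
  for g h :: "real^'n \<Rightarrow> ereal"
proof -
  assume a: "g \<in> trop_rat" "h \<in> trop_rat"
  have "((\<lambda>x. g x + h x), (\<lambda>x. g x + h x)) \<in> E"
    by (rule cong_add[OF cong_refl[OF a(1)] cong_refl[OF a(2)]])
  thus ?thesis using cong_dom by blast
qed

lemma qrep_class: "g \<in> trop_rat \<Longrightarrow> (g, qrep (E``{g})) \<in> E"
proof -
  assume a: "g \<in> trop_rat"
  have "g \<in> E``{g}" using cong_refl[OF a] by simp
  hence "qrep (E``{g}) \<in> E``{g}" unfolding qrep_def by (rule someI[of "\<lambda>f. f \<in> E``{g}" g])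
  thus ?thesis by simp
qed

lemma qrep_class': "g \<in> trop_rat \<Longrightarrow> (qrep (E``{g}), g) \<in> E"
  using qrep_class cong_sym by blast

lemma class_eq: "(g,h) \<in> E \<Longrightarrow> E``{g} = E``{h}"
  using cong_equiv by (rule equiv_class_eq)

lemma class_eq_iff: "g \<in> trop_rat \<Longrightarrow> h \<in> trop_rat \<Longrightarrow> E``{g} = E``{h} \<longleftrightarrow> (g,h) \<in> E"
  using cong_equiv by (rule eq_equiv_class_iff)

lemma qcarrier_rep: "X \<in> qcarrier E \<Longrightarrow> qrep X \<in> trop_rat \<and> X = E``{qrep X}"
proof -
  assume a: "X \<in> qcarrier E"
  then obtain g where g: "X = E``{g}" "g \<in> trop_rat" unfolding qcarrier_def by (auto elim: quotientE)
  have "(g, qrep X) \<in> E" using qrep_class[OF g(2)] g(1) by simp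
  thus ?thesis using g class_eq cong_dom by blast
qed

lemma qcarrier_class: "g \<in> trop_rat \<Longrightarrow> E``{g} \<in> qcarrier E"
  unfolding qcarrier_def by (rule quotientI)

lemma qadd_class: "g \<in> trop_rat \<Longrightarrow> h \<in> trop_rat \<Longrightarrow>
   qadd E (E``{g}) (E``{h}) = E``{\<lambda>x. max (g x) (h x)}"
  unfolding qadd_def using class_eq cong_max qrep_class' by blast

lemma qmul_class: "g \<in> trop_rat \<Longrightarrow> h \<in> trop_rat \<Longrightarrow>
   qmul E (E``{g}) (E``{h}) = E``{\<lambda>x. g x + h x}"
  unfolding qmul_def using class_eq cong_add qrep_class' by blast

lemma qrep_eval: "g \<in> trop_rat \<Longrightarrow> x \<in> Vset E \<Longrightarrow> qrep (E``{g}) x = g x"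
  using qrep_class[of g] unfolding Vset_def by fastforce

end


definition polyf :: "(real \<times> ('n \<Rightarrow> nat)) set \<Rightarrow> real^'n::finite \<Rightarrow> ereal" where
  "polyf S = (\<lambda>x. SUP ca\<in>S. ereal (fst ca + (\<Sum>i\<in>UNIV. real (snd ca i) * x $ i)))"

lemma trop_poly_iff: "p \<in> trop_poly \<longleftrightarrow> (\<exists>S. finite S \<and> p = polyf S)"
  unfolding trop_poly_def polyf_def by auto

lemma SUP_ereal_finite:
  fixes h :: "'a \<Rightarrow> real"
  assumes "finite S" "S \<noteq> {}" shows "\<exists>r. (SUP a\<in>S. ereal (h a)) = ereal r"
  using assms
proof (induction S rule: finite_ne_induct)
  case (singleton x) then show ?case by simp
next
  case (insert x F)
  then obtain r where "(SUP a\<in>F. ereal (h a)) = ereal r" by blast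
  then show ?case by (simp add: sup_max max_def)
qed

lemma polyf_real: "finite S \<Longrightarrow> S \<noteq> {} \<Longrightarrow> \<exists>r. polyf S z = ereal r"
  unfolding polyf_def by (rule SUP_ereal_finite)

lemma polyf_empty: "polyf {} = (\<lambda>z. -\<infinity>)"
  unfolding polyf_def by (simp add: bot_ereal_def)

lemma polyf_not_inf: "finite S \<Longrightarrow> polyf S z \<noteq> \<infinity>"
proof (cases "S = {}")
  case True then show ?thesis by (simp add: polyf_empty)
next
  case False
  assume "finite S"
  then obtain r where "polyf S z = ereal r" using polyf_real False by blast
  then show ?thesis by simp
qed

lemma polyf_single: "polyf {(r, \<lambda>_. 0)} = (\<lambda>z::real^'n::finite. ereal r)"
  unfolding polyf_def by simp

lemma const_poly: "(\<lambda>z::real^'n::finite. ereal r) \<in> trop_poly"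
  unfolding trop_poly_iff using polyf_single[symmetric] by blast

lemma const0_poly: "(\<lambda>z::real^'n::finite. 0::ereal) \<in> trop_poly"
  using const_poly[of 0] by (simp add: zero_ereal_def)

lemma poly_rat: "p \<in> trop_poly \<Longrightarrow> p \<in> trop_rat"
  unfolding trop_rat_def
  apply (rule CollectI)
  apply (rule exI[of _ p], rule exI[of _ "\<lambda>z. 0"])
  by (simp add: const0_poly fun_eq_iff)

lemma const_rat: "c \<noteq> \<infinity> \<Longrightarrow> (\<lambda>z::real^'n::finite. c) \<in> trop_rat"
proof -
  assume c: "c \<noteq> \<infinity>"
  show ?thesis
  proof (cases c)
    case (real r)
    then show ?thesis by (simp add: poly_rat const_poly)
  next
    case MInf
    have "(\<lambda>z::real^'n. c) \<in> trop_poly" unfolding trop_poly_iff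
      by (intro exI[of _ "{}"]) (simp add: polyf_empty MInf)
    then show ?thesis by (rule poly_rat)
  qed (use c in simp)
qed

lemma coord_poly: "(\<lambda>z::real^'n::finite. ereal (z $ j)) \<in> trop_poly"
proof -
  have e: "(\<Sum>i\<in>UNIV. real (if i = j then 1 else 0) * x $ i) = x $ j" for x :: "real^'n"
  proof -
    have "(\<Sum>i\<in>UNIV. real (if i = j then 1 else 0) * x $ i) = (\<Sum>i\<in>UNIV. if i = j then x$i else 0)"
      by (rule sum.cong) auto
    also have "\<dots> = x $ j" by simp
    finally show ?thesis .
  qed
  have "polyf {(0, \<lambda>i. if i = j then 1 else 0)} = (\<lambda>z::real^'n. ereal (z $ j))"
    unfolding polyf_def by (simp add: e)
  then show ?thesis unfolding trop_poly_iff by (intro exI[of _ "{(0, \<lambda>i. if i = j then 1 else 0)}"]) simp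
qed

lemma negcoord_rat: "(\<lambda>z::real^'n::finite. ereal (- z $ j)) \<in> trop_rat"
  unfolding trop_rat_def
  apply (rule CollectI)
  apply (rule exI[of _ "\<lambda>z. 0"], rule exI[of _ "\<lambda>z. ereal (z $ j)"])
  by (simp add: const0_poly coord_poly fun_eq_iff)


lemma rat_decomp: "f \<in> trop_rat \<Longrightarrow> \<exists>S T. finite S \<and> finite T \<and> T \<noteq> {} \<and>
    f = (\<lambda>z. polyf S z - polyf T z)"
proof -
  assume "f \<in> trop_rat"
  then obtain p q where pq: "p \<in> trop_poly" "q \<in> trop_poly" "q \<noteq> (\<lambda>x. -\<infinity>)" "f = (\<lambda>x. p x - q x)"
    unfolding trop_rat_def by blast
  obtain S where S: "finite S" "p = polyf S" using pq(1) unfolding trop_poly_iff by blast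
  obtain T where T: "finite T" "q = polyf T" using pq(2) unfolding trop_poly_iff by blast
  have "T \<noteq> {}" using pq(3) T(2) polyf_empty by auto
  then show ?thesis using S T pq(4) by blast
qed

lemma rat_not_inf: "f \<in> trop_rat \<Longrightarrow> f z \<noteq> \<infinity>"
proof -
  assume "f \<in> trop_rat"
  then obtain S T where ST: "finite S" "finite T" "T \<noteq> {}" "f = (\<lambda>z. polyf S z - polyf T z)"
    using rat_decomp by blast
  obtain r where r: "polyf T z = ereal r" using polyf_real ST by blast
  have "polyf S z \<noteq> \<infinity>" using polyf_not_inf ST by blast
  then show ?thesis using ST(4) r by (cases "polyf S z") auto
qed

context
  fixes E :: "((real^'n \<Rightarrow> ereal) \<times> (real^'n \<Rightarrow> ereal)) set"
    and F :: "((real^'m \<Rightarrow> ereal) \<times> (real^'m \<Rightarrow> ereal)) set"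
    and \<psi> :: "(real^'n \<Rightarrow> ereal) set \<Rightarrow> (real^'m \<Rightarrow> ereal) set"
    and y :: "real^'m"
  assumes cE: "trop_congruence E" and cF: "trop_congruence F" and hom: "talg_hom E F \<psi>"
    and yW: "y \<in> Vset F"
begin

abbreviation Phi :: "(real^'n \<Rightarrow> ereal) \<Rightarrow> ereal" where
  "Phi g \<equiv> qrep (\<psi> (E``{g})) y"

lemma psi_class: "g \<in> trop_rat \<Longrightarrow> qrep (\<psi> (E``{g})) \<in> trop_rat \<and> \<psi> (E``{g}) = F``{qrep (\<psi> (E``{g}))}"
  using hom qcarrier_class[OF cE] qcarrier_rep[OF cF] unfolding talg_hom_def by blast

lemma Phi_max: "g \<in> trop_rat \<Longrightarrow> h \<in> trop_rat \<Longrightarrow> Phi (\<lambda>x. max (g x) (h x)) = max (Phi g) (Phi h)"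
proof -
  assume g: "g \<in> trop_rat" and h: "h \<in> trop_rat"
  define u where "u = qrep (\<psi> (E``{g}))"
  define v where "v = qrep (\<psi> (E``{h}))"
  have u: "u \<in> trop_rat" "\<psi> (E``{g}) = F``{u}" using psi_class[OF g] u_def by auto
  have v: "v \<in> trop_rat" "\<psi> (E``{h}) = F``{v}" using psi_class[OF h] v_def by auto
  have "\<psi> (E``{\<lambda>x. max (g x) (h x)}) = \<psi> (qadd E (E``{g}) (E``{h}))"
    using qadd_class[OF cE g h] by simp
  also have "\<dots> = qadd F (\<psi> (E``{g})) (\<psi> (E``{h}))"
    using hom qcarrier_class[OF cE g] qcarrier_class[OF cE h] unfolding talg_hom_def by blast
  also have "\<dots> = F``{\<lambda>x. max (u x) (v x)}" using u v qadd_class[OF cF u(1) v(1)] by simp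
  finally have "Phi (\<lambda>x. max (g x) (h x)) = qrep (F``{\<lambda>x. max (u x) (v x)}) y" by simp
  also have "\<dots> = max (u y) (v y)" using qrep_eval[OF cF rat_max[OF cF u(1) v(1)] yW] .
  finally show ?thesis using u_def v_def by simp
qed

lemma Phi_add: "g \<in> trop_rat \<Longrightarrow> h \<in> trop_rat \<Longrightarrow> Phi (\<lambda>x. g x + h x) = Phi g + Phi h"
proof -
  assume g: "g \<in> trop_rat" and h: "h \<in> trop_rat"
  define u where "u = qrep (\<psi> (E``{g}))"
  define v where "v = qrep (\<psi> (E``{h}))"
  have u: "u \<in> trop_rat" "\<psi> (E``{g}) = F``{u}" using psi_class[OF g] u_def by auto
  have v: "v \<in> trop_rat" "\<psi> (E``{h}) = F``{v}" using psi_class[OF h] v_def by auto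
  have "\<psi> (E``{\<lambda>x. g x + h x}) = \<psi> (qmul E (E``{g}) (E``{h}))"
    using qmul_class[OF cE g h] by simp
  also have "\<dots> = qmul F (\<psi> (E``{g})) (\<psi> (E``{h}))"
    using hom qcarrier_class[OF cE g] qcarrier_class[OF cE h] unfolding talg_hom_def by blast
  also have "\<dots> = F``{\<lambda>x. u x + v x}" using u v qmul_class[OF cF u(1) v(1)] by simp
  finally have "Phi (\<lambda>x. g x + h x) = qrep (F``{\<lambda>x. u x + v x}) y" by simp
  also have "\<dots> = u y + v y" using qrep_eval[OF cF rat_add[OF cF u(1) v(1)] yW] .
  finally show ?thesis using u_def v_def by simp
qed

lemma Phi_const: "c \<noteq> \<infinity> \<Longrightarrow> Phi (\<lambda>x. c) = c"
proof -
  assume c: "c \<noteq> \<infinity>"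
  have "\<psi> (E``{\<lambda>x. c}) = F``{\<lambda>x. c}"
    using hom c unfolding talg_hom_def qconst_def by blast
  then show ?thesis using qrep_eval[OF cF const_rat[OF c] yW] by simp
qed

lemma Phi_eq: "(g, h) \<in> E \<Longrightarrow> Phi g = Phi h"
  using class_eq[OF cE] by metis

definition xv :: "real^'n" where
  "xv = (\<chi> j. real_of_ereal (Phi (\<lambda>z. ereal (z $ j))))"

lemma Phi_coord: "Phi (\<lambda>z. ereal (z $ j)) = ereal (xv $ j)"
proof -
  have X: "(\<lambda>z::real^'n. ereal (z $ j)) \<in> trop_rat" using poly_rat coord_poly by blast
  have "Phi (\<lambda>z. ereal (z $ j) + ereal (- z $ j)) = Phi (\<lambda>z. ereal (z $ j)) + Phi (\<lambda>z. ereal (- z $ j))"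
    by (rule Phi_add[OF X negcoord_rat])
  moreover have "(\<lambda>z::real^'n. ereal (z $ j) + ereal (- z $ j)) = (\<lambda>z. 0)"
    by (simp add: fun_eq_iff zero_ereal_def)
  moreover have "Phi (\<lambda>z. 0) = 0" by (rule Phi_const) simp
  ultimately have s: "Phi (\<lambda>z. ereal (z $ j)) + Phi (\<lambda>z. ereal (- z $ j)) = 0" by simp
  have "\<bar>Phi (\<lambda>z. ereal (z $ j))\<bar> \<noteq> \<infinity>"
    using s by (cases "Phi (\<lambda>z. ereal (z $ j))"; cases "Phi (\<lambda>z. ereal (- z $ j))") auto
  then show ?thesis unfolding xv_def by (simp add: ereal_real')
qed

lemma Phi_lin: "(\<lambda>z::real^'n. ereal (real k * z $ j)) \<in> trop_rat \<and>
   Phi (\<lambda>z. ereal (real k * z $ j)) = ereal (real k * xv $ j)"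
proof (induction k)
  case 0
  have "(\<lambda>z::real^'n. ereal (real 0 * z $ j)) = (\<lambda>z. 0)" by (simp add: fun_eq_iff zero_ereal_def)
  moreover have "Phi (\<lambda>z. 0) = 0" by (rule Phi_const) simp
  moreover have "(\<lambda>z::real^'n. 0::ereal) \<in> trop_rat" by (rule const_rat) simp
  ultimately show ?case by (simp add: zero_ereal_def)
next
  case (Suc k)
  have X: "(\<lambda>z::real^'n. ereal (z $ j)) \<in> trop_rat" using poly_rat coord_poly by blast
  have e: "(\<lambda>z::real^'n. ereal (real (Suc k) * z $ j)) = (\<lambda>z. ereal (real k * z $ j) + ereal (z $ j))"
    by (simp add: fun_eq_iff algebra_simps)
  show ?case unfolding e
    using rat_add[OF cE conjunct1[OF Suc.IH] X] Phi_add[OF conjunct1[OF Suc.IH] X] Suc.IH Phi_coord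
    by (simp add: algebra_simps)
qed

lemma Phi_mono: "finite A \<Longrightarrow> (\<lambda>z::real^'n. ereal (c + (\<Sum>i\<in>A. real (a i) * z $ i))) \<in> trop_rat \<and>
   Phi (\<lambda>z. ereal (c + (\<Sum>i\<in>A. real (a i) * z $ i))) = ereal (c + (\<Sum>i\<in>A. real (a i) * xv $ i))"
proof (induction A rule: finite_induct)
  case empty
  show ?case using const_rat[of "ereal c"] Phi_const[of "ereal c"] by simp
next
  case (insert j A)
  have e: "(\<lambda>z::real^'n. ereal (c + (\<Sum>i\<in>insert j A. real (a i) * z $ i))) =
     (\<lambda>z. ereal (c + (\<Sum>i\<in>A. real (a i) * z $ i)) + ereal (real (a j) * z $ j))"
    using insert(1,2) by (simp add: fun_eq_iff algebra_simps)
  have L: "(\<lambda>z::real^'n. ereal (real (a j) * z $ j)) \<in> trop_rat \<and>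
     Phi (\<lambda>z. ereal (real (a j) * z $ j)) = ereal (real (a j) * xv $ j)" by (rule Phi_lin)
  have r: "(\<lambda>z::real^'n. ereal (c + (\<Sum>i\<in>A. real (a i) * z $ i)) + ereal (real (a j) * z $ j)) \<in> trop_rat"
    by (rule rat_add[OF cE conjunct1[OF insert.IH] conjunct1[OF L]])
  have p: "Phi (\<lambda>z. ereal (c + (\<Sum>i\<in>A. real (a i) * z $ i)) + ereal (real (a j) * z $ j))
     = ereal (c + (\<Sum>i\<in>A. real (a i) * xv $ i)) + ereal (real (a j) * xv $ j)"
    using Phi_add[OF conjunct1[OF insert.IH] conjunct1[OF L]] insert.IH L by simp
  have q: "ereal (c + (\<Sum>i\<in>A. real (a i) * xv $ i)) + ereal (real (a j) * xv $ j) =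
     ereal (c + (\<Sum>i\<in>insert j A. real (a i) * xv $ i))"
    using insert(1,2) by (simp add: algebra_simps)
  show ?case unfolding e using r p q by simp
qed

lemma Phi_poly: "finite S \<Longrightarrow> polyf S \<in> trop_rat \<and> Phi (polyf S) = polyf S xv"
proof (induction S rule: finite_induct)
  case empty
  show ?case using const_rat[of "-\<infinity>"] Phi_const[of "-\<infinity>"] by (simp add: polyf_empty)
next
  case (insert ca S)
  define m where "m = (\<lambda>z::real^'n. ereal (fst ca + (\<Sum>i\<in>UNIV. real (snd ca i) * z $ i)))"
  have e: "polyf (insert ca S) = (\<lambda>z. max (m z) (polyf S z))"
    unfolding polyf_def m_def by (simp add: sup_max)
  have m: "m \<in> trop_rat \<and> Phi m = m xv" unfolding m_def using Phi_mono[of UNIV] by simp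
  show ?case unfolding e
    using rat_max[OF cE conjunct1[OF m] conjunct1[OF insert.IH]]
      Phi_max[OF conjunct1[OF m] conjunct1[OF insert.IH]] m insert.IH by simp
qed

lemma Phi_rat: "f \<in> trop_rat \<Longrightarrow> Phi f = f xv"
proof -
  assume f: "f \<in> trop_rat"
  then obtain S T where ST: "finite S" "finite T" "T \<noteq> {}" "f = (\<lambda>z. polyf S z - polyf T z)"
    using rat_decomp by blast
  have e: "(\<lambda>z. f z + polyf T z) = polyf S"
  proof
    fix z
    obtain r where r: "polyf T z = ereal r" using polyf_real ST by blast
    show "f z + polyf T z = polyf S z" using ST(4) r by (cases "polyf S z") auto
  qed
  obtain r where r: "polyf T xv = ereal r" using polyf_real ST by blast
  have "Phi (polyf S) = Phi f + Phi (polyf T)"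
    using Phi_add[OF f conjunct1[OF Phi_poly[OF ST(2)]]] e by simp
  hence "polyf S xv = Phi f + ereal r" using Phi_poly ST r by simp
  then show ?thesis using ST(4) r by (cases "Phi f") auto
qed

lemma xv_V: "xv \<in> Vset E"
  unfolding Vset_def
proof (safe)
  fix g h assume gh: "(g, h) \<in> E"
  have "g \<in> trop_rat" "h \<in> trop_rat" using cong_dom[OF cE gh] by auto
  then show "g xv = h xv" using Phi_rat Phi_eq[OF gh] by metis
qed

lemma qeval_psi: "f \<in> qcarrier E \<Longrightarrow> qeval (\<psi> f) y = qeval f xv"
proof -
  assume f: "f \<in> qcarrier E"
  have g: "qrep f \<in> trop_rat" "f = E``{qrep f}" using qcarrier_rep[OF cE f] by auto
  have "qeval (\<psi> f) y = Phi (qrep f)" unfolding qeval_def using g(2) by metis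
  also have "\<dots> = qrep f xv" using Phi_rat[OF g(1)] .
  finally show ?thesis unfolding qeval_def .
qed

lemma point_exists: "\<exists>x\<in>Vset E. \<forall>f\<in>qcarrier E. qeval (\<psi> f) y = qeval f x"
  using xv_V qeval_psi by blast

end

lemma transfer:
  fixes E :: "((real^'n \<Rightarrow> ereal) \<times> (real^'n \<Rightarrow> ereal)) set"
    and F :: "((real^'m \<Rightarrow> ereal) \<times> (real^'m \<Rightarrow> ereal)) set"
    and \<psi> :: "(real^'n \<Rightarrow> ereal) set \<Rightarrow> (real^'m \<Rightarrow> ereal) set"
  assumes cE: "trop_congruence E" and cF: "trop_congruence F" and hom: "talg_hom E F \<psi>"
    and inj: "inj_on \<psi> (qcarrier E)" and FE: "F = Eset (Vset F)"
    and g: "g \<in> trop_rat" and g': "g' \<in> trop_rat"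
    and eq: "\<forall>y\<in>Vset F. qrep (\<psi> (E``{g})) y = qrep (\<psi> (E``{g'})) y"
    and x: "x \<in> Vset E"
  shows "g x = g' x"
proof -
  have u: "qrep (\<psi> (E``{g})) \<in> trop_rat" "\<psi> (E``{g}) = F``{qrep (\<psi> (E``{g}))}"
  proof -
    have "\<psi> (E``{g}) \<in> qcarrier F" using hom qcarrier_class[OF cE g] unfolding talg_hom_def by blast
    from qcarrier_rep[OF cF this] show "qrep (\<psi> (E``{g})) \<in> trop_rat" "\<psi> (E``{g}) = F``{qrep (\<psi> (E``{g}))}" by auto
  qed
  have u': "qrep (\<psi> (E``{g'})) \<in> trop_rat" "\<psi> (E``{g'}) = F``{qrep (\<psi> (E``{g'}))}"
  proof -
    have "\<psi> (E``{g'}) \<in> qcarrier F" using hom qcarrier_class[OF cE g'] unfolding talg_hom_def by blast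
    from qcarrier_rep[OF cF this] show "qrep (\<psi> (E``{g'})) \<in> trop_rat" "\<psi> (E``{g'}) = F``{qrep (\<psi> (E``{g'}))}" by auto
  qed
  have "(qrep (\<psi> (E``{g})), qrep (\<psi> (E``{g'}))) \<in> F"
    using u(1) u'(1) eq FE unfolding Eset_def by blast
  hence "\<psi> (E``{g}) = \<psi> (E``{g'})" using u(2) u'(2) class_eq[OF cF] by metis
  hence "E``{g} = E``{g'}" using inj qcarrier_class[OF cE g] qcarrier_class[OF cE g'] inj_on_def by metis
  hence "(g, g') \<in> E" using class_eq_iff[OF cE g g'] by blast
  then show ?thesis using x unfolding Vset_def by blast
qed

theorem corollary3p17:
  fixes E :: "((real^'n \<Rightarrow> ereal) \<times> (real^'n \<Rightarrow> ereal)) set"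
    and F :: "((real^'m \<Rightarrow> ereal) \<times> (real^'m \<Rightarrow> ereal)) set"
    and \<psi> :: "(real^'n \<Rightarrow> ereal) set \<Rightarrow> (real^'m \<Rightarrow> ereal) set"
  assumes "trop_congruence E" and "trop_congruence F" and "talg_hom E F \<psi>"
  shows "(\<forall>f\<in>qcarrier E.
           (SUP x\<in>Vset E. qeval f x) \<ge> (SUP y\<in>Vset F. qeval (\<psi> f) y) \<and>
           (INF x\<in>Vset E. qeval f x) \<le> (INF y\<in>Vset F. qeval (\<psi> f) y)) \<and>
         (Vset F \<noteq> {} \<and> inj_on \<psi> (qcarrier E) \<and> F = Eset (Vset F) \<longrightarrow>
         (\<forall>f\<in>qcarrier E.
           (SUP x\<in>Vset E. qeval f x) = (SUP y\<in>Vset F. qeval (\<psi> f) y) \<and>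
           (INF x\<in>Vset E. qeval f x) = (INF y\<in>Vset F. qeval (\<psi> f) y)))"
proof -
  note cE = assms(1) and cF = assms(2) and hom = assms(3)
  have P1: "(SUP x\<in>Vset E. qeval f x) \<ge> (SUP y\<in>Vset F. qeval (\<psi> f) y) \<and>
           (INF x\<in>Vset E. qeval f x) \<le> (INF y\<in>Vset F. qeval (\<psi> f) y)" if f: "f \<in> qcarrier E" for f
  proof
    show "(SUP y\<in>Vset F. qeval (\<psi> f) y) \<le> (SUP x\<in>Vset E. qeval f x)"
    proof (rule SUP_mono)
      fix y assume "y \<in> Vset F"
      then obtain x where "x \<in> Vset E" "qeval (\<psi> f) y = qeval f x"
        using point_exists[OF cE cF hom] f by blast
      then show "\<exists>x\<in>Vset E. qeval (\<psi> f) y \<le> qeval f x" by auto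
    qed
    show "(INF x\<in>Vset E. qeval f x) \<le> (INF y\<in>Vset F. qeval (\<psi> f) y)"
    proof (rule INF_mono)
      fix y assume "y \<in> Vset F"
      then obtain x where "x \<in> Vset E" "qeval (\<psi> f) y = qeval f x"
        using point_exists[OF cE cF hom] f by blast
      then show "\<exists>x\<in>Vset E. qeval f x \<le> qeval (\<psi> f) y" by auto
    qed
  qed
  have P2: "(SUP x\<in>Vset E. qeval f x) = (SUP y\<in>Vset F. qeval (\<psi> f) y) \<and>
           (INF x\<in>Vset E. qeval f x) = (INF y\<in>Vset F. qeval (\<psi> f) y)"
    if f: "f \<in> qcarrier E" and ne: "Vset F \<noteq> {}" and inj: "inj_on \<psi> (qcarrier E)"
      and FE: "F = Eset (Vset F)" for f
  proof -
    define g where "g = qrep f"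
    have g: "g \<in> trop_rat" "f = E``{g}" using qcarrier_rep[OF cE f] g_def by auto
    have qf: "qeval f x = g x" for x unfolding qeval_def g_def ..
    have qpf: "qeval (\<psi> f) y = qrep (\<psi> (E``{g})) y" for y unfolding qeval_def using g(2) by simp
    have "(SUP x\<in>Vset E. qeval f x) \<le> (SUP y\<in>Vset F. qeval (\<psi> f) y)"
    proof (cases "(SUP y\<in>Vset F. qeval (\<psi> f) y) = \<infinity>")
      case True then show ?thesis by simp
    next
      case False
      define c where "c = (SUP y\<in>Vset F. qeval (\<psi> f) y)"
      have c: "c \<noteq> \<infinity>" using False c_def by simp
      have cr: "(\<lambda>x::real^'n. c) \<in> trop_rat" by (rule const_rat[OF c])
      have mr: "(\<lambda>x. max (g x) c) \<in> trop_rat" by (rule rat_max[OF cE g(1) cr])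
      have "\<forall>y\<in>Vset F. qrep (\<psi> (E``{\<lambda>x. max (g x) c})) y = qrep (\<psi> (E``{\<lambda>x. c})) y"
      proof
        fix y assume y: "y \<in> Vset F"
        have "qeval (\<psi> f) y \<le> c" unfolding c_def using y by (rule SUP_upper)
        then show "qrep (\<psi> (E``{\<lambda>x. max (g x) c})) y = qrep (\<psi> (E``{\<lambda>x. c})) y"
          using Phi_max[OF cE cF hom y g(1) cr] Phi_const[OF cE cF hom y c] qpf
          by (simp add: max_def)
      qed
      then have "max (g x) c = c" if "x \<in> Vset E" for x
        using transfer[OF cE cF hom inj FE mr cr _ that] by blast
      then have "g x \<le> c" if "x \<in> Vset E" for x using that by (metis max.cobounded1)
      then show ?thesis unfolding c_def qf by (rule SUP_least)
    qed
    moreover have "(INF y\<in>Vset F. qeval (\<psi> f) y) \<le> (INF x\<in>Vset E. qeval f x)"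
    proof -
      define t where "t = (INF y\<in>Vset F. qeval (\<psi> f) y)"
      obtain y0 where y0: "y0 \<in> Vset F" using ne by blast
      have "qrep (\<psi> f) \<in> trop_rat"
        using hom f qcarrier_rep[OF cF] unfolding talg_hom_def by blast
      then have "qeval (\<psi> f) y0 \<noteq> \<infinity>" unfolding qeval_def by (rule rat_not_inf)
      moreover have "t \<le> qeval (\<psi> f) y0" unfolding t_def using y0 by (rule INF_lower)
      ultimately have c: "t \<noteq> \<infinity>" by auto
      have cr: "(\<lambda>x::real^'n. t) \<in> trop_rat" by (rule const_rat[OF c])
      have mr: "(\<lambda>x. max (g x) t) \<in> trop_rat" by (rule rat_max[OF cE g(1) cr])
      have "\<forall>y\<in>Vset F. qrep (\<psi> (E``{\<lambda>x. max (g x) t})) y = qrep (\<psi> (E``{g})) y"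
      proof
        fix y assume y: "y \<in> Vset F"
        have "t \<le> qeval (\<psi> f) y" unfolding t_def using y by (rule INF_lower)
        then show "qrep (\<psi> (E``{\<lambda>x. max (g x) t})) y = qrep (\<psi> (E``{g})) y"
          using Phi_max[OF cE cF hom y g(1) cr] Phi_const[OF cE cF hom y c] qpf
          by (simp add: max_def)
      qed
      then have "max (g x) t = g x" if "x \<in> Vset E" for x
        using transfer[OF cE cF hom inj FE mr g(1) _ that] by blast
      then have "t \<le> g x" if "x \<in> Vset E" for x using that by (metis max.cobounded2)
      then show ?thesis unfolding t_def qf by (rule INF_greatest)
    qed
    ultimately show ?thesis using P1[OF f] by auto
  qed
  show ?thesis using P1 P2 by blast
qed

end
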